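(* Let $G$ be a circle of circumference $1$ and $n\ge1$. The mechanism $M$ (LRM when the agents lie on one semicircle, RC otherwise) is strategyproof, and for every $\mathbf{x}\in G^n$, $\mathrm{mc}(M(\mathbf{x}),\mathbf{x})\le\frac32\min_{y\in G}\mathrm{mc}(y,\mathbf{x})$.
   Context: $G$ is a circle of circumference $1$; $d(x,y)$ is the length of the shorter arc between $x,y$; $\hat{x}$ denotes the antipodal point of $x$. Agents $N=\{1,\dots,n\}$ have locations $\mathbf{x}\in G^n$. For a distribution $P$ on $G$: $\mathrm{cost}(P,x_i)=\mathbb{E}_{y\sim P}[d(x_i,y)]$ and $\mathrm{mc}(P,\mathbf{x})=\mathbb{E}_{y\sim P}[\max_{i}d(y,x_i)]$. A mechanism $f:G^n\to\Delta(G)$ is strategyproof if $\mathrm{cost}(f(x_i',\mathbf{x}_{-i}),x_i)\ge\mathrm{cost}(f(\mathbf{x}),x_i)$ for all $\mathbf{x},i,x_i'$. The agents are on one semicircle if all $x_i$ lie in some closed arc of length $1/2$. LRM mechanism (used when agents are on one semicircle): fix a closed arc of minimal length containing all $x_i$ (its length is at most $1/2$; its endpoints $l,r$ are agent locations); return $l$ with probability $1/4$, $r$ with probability $1/4$, and the midpoint $\mathrm{cen}(l,r)$ of that arc with probability $1/2$. RC (Random Center) mechanism (used when agents are not on one semicircle): the antipodal points $\hat{x}_1,\dots,\hat{x}_n$ partition $G$ into arcs between cyclically consecutive antipodal points; choose a point $y$ uniformly at random on $G$ and return the midpoint of the arc of this partition containing $y$ (equivalently, return the midpoint of each such arc with probability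 equal to its length). $M(\mathbf{x})=\mathrm{lrm}(\mathbf{x})$ if agents are on one semicircle and $M(\mathbf{x})=\mathrm{rc}(\mathbf{x})$ otherwise. *)

theory Defs
  imports "HOL-Probability.Probability"
begin

text \<open>The circle G of circumference 1 is represented by the interval [0,1) of reals,
  points being identified modulo 1.  A profile of n agents is a function
  x :: nat \<Rightarrow> real with x i \<in> [0,1) for i < n (agents are 0,...,n-1).
  Distributions on G are probability mass functions on real supported in [0,1).\<close>

definition cdist :: "real \<Rightarrow> real \<Rightarrow> real" where
  "cdist x y = min (frac (x - y)) (frac (y - x))"

definition antipode :: "real \<Rightarrow> real" where
  "antipode x = frac (x + 1/2)"

definition profile :: "nat \<Rightarrow> (nat \<Rightarrow> real) \<Rightarrow> bool" where
  "profile n x \<longleftrightarrow> (\<forall>i<n. x i \<in> {0..<1})"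

definition cost :: "real pmf \<Rightarrow> real \<Rightarrow> real" where
  "cost P xi = measure_pmf.expectation P (\<lambda>y. cdist xi y)"

definition mc :: "nat \<Rightarrow> real pmf \<Rightarrow> (nat \<Rightarrow> real) \<Rightarrow> real" where
  "mc n P x = measure_pmf.expectation P (\<lambda>y. Max ((\<lambda>i. cdist y (x i)) ` {..<n}))"

text \<open>The closed arc starting at l (going in the positive direction) of length L contains p.\<close>
definition in_arc :: "real \<Rightarrow> real \<Rightarrow> real \<Rightarrow> bool" where
  "in_arc l L p \<longleftrightarrow> frac (p - l) \<le> L"

definition covers :: "nat \<Rightarrow> (nat \<Rightarrow> real) \<Rightarrow> real \<Rightarrow> real \<Rightarrow> bool" where
  "covers n x l L \<longleftrightarrow> (\<forall>i<n. in_arc l L (x i))"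

definition one_semicircle :: "nat \<Rightarrow> (nat \<Rightarrow> real) \<Rightarrow> bool" where
  "one_semicircle n x \<longleftrightarrow> (\<exists>l. covers n x l (1/2))"

definition lrm_arc :: "nat \<Rightarrow> (nat \<Rightarrow> real) \<Rightarrow> real \<times> real" where
  "lrm_arc n x = (SOME (l, L). 0 \<le> L \<and> covers n x l L
      \<and> (\<forall>l' L'. covers n x l' L' \<longrightarrow> L \<le> L')
      \<and> (\<exists>i<n. x i = l) \<and> (\<exists>j<n. x j = frac (l + L)))"

definition lrm :: "nat \<Rightarrow> (nat \<Rightarrow> real) \<Rightarrow> real pmf" where
  "lrm n x = (case lrm_arc n x of (l, L) \<Rightarrow>
      pmf_of_list [(l, 1/4), (frac (l + L), 1/4), (frac (l + L/2), 1/2)])"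

text \<open>Random Center: the set A of antipodal points; for a \<in> A, gap a is the length of
  the arc from a to the next antipodal point in the positive direction (1 if A = {a}).
  The midpoint of that arc is returned with probability equal to its length.\<close>
definition antipodes :: "nat \<Rightarrow> (nat \<Rightarrow> real) \<Rightarrow> real set" where
  "antipodes n x = (\<lambda>i. antipode (x i)) ` {..<n}"

definition gap :: "real set \<Rightarrow> real \<Rightarrow> real" where
  "gap A a = Min (insert 1 ((\<lambda>b. frac (b - a)) ` (A - {a})))"

definition rc :: "nat \<Rightarrow> (nat \<Rightarrow> real) \<Rightarrow> real pmf" where
  "rc n x = embed_pmf (\<lambda>q. \<Sum>a\<in>antipodes n x.
      if frac (a + gap (antipodes n x) a / 2) = q then gap (antipodes n x) a else 0)"

definition M :: "nat \<Rightarrow> (nat \<Rightarrow> real) \<Rightarrow> real pmf" where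
  "M n x = (if one_semicircle n x then lrm n x else rc n x)"

definition strategyproof :: "nat \<Rightarrow> ((nat \<Rightarrow> real) \<Rightarrow> real pmf) \<Rightarrow> bool" where
  "strategyproof n f \<longleftrightarrow> (\<forall>x i xi'. profile n x \<longrightarrow> i < n \<longrightarrow> xi' \<in> {0..<1} \<longrightarrow>
      cost (f (x(i := xi'))) (x i) \<ge> cost (f x) (x i))"

end

theory Submission
  imports Defs
begin

definition Dd :: "real \<Rightarrow> real" where
  "Dd t = min (frac t) (1 - frac t)"

lemma cd_Dd: "cdist x y = Dd (x - y)"
proof -
  have "frac (y - x) = frac (- (x - y))" by simp
  also have "\<dots> = (if x - y \<in> \<int> then 0 else 1 - frac (x - y))" by (rule frac_neg)
  finally have e: "frac (y - x) = (if x - y \<in> \<int> then 0 else 1 - frac (x - y))" .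
  show ?thesis
  proof (cases "x - y \<in> \<int>")
    case True
    then have "frac (x - y) = 0" by simp
    moreover have "frac (y - x) = 0" using e True by simp
    ultimately show ?thesis unfolding cdist_def Dd_def by (simp only:)
  qed (use e in \<open>simp add: cdist_def Dd_def\<close>)
qed

lemma Dd_frac_cong: "frac t = frac s \<Longrightarrow> Dd t = Dd s"
  by (simp add: Dd_def)

lemma Dd_nonneg: "0 \<le> Dd t" using frac_lt_1[of t] by (simp add: Dd_def)
lemma Dd_le_half: "Dd t \<le> 1/2" by (simp add: Dd_def min_def)

lemma Dd_abs: assumes "\<bar>t\<bar> \<le> 1" shows "Dd t = min \<bar>t\<bar> (1 - \<bar>t\<bar>)"
proof (cases "t = 1 \<or> t = -1")
  case True
  then have "t \<in> \<int>" by auto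
  then have h: "frac t = 0" by simp
  have "\<bar>t\<bar> = 1" using True by auto
  then show ?thesis unfolding Dd_def by (simp only: h)
next
  case False
  show ?thesis
  proof (cases "t \<ge> 0")
    case True
    then have "frac t = t" using False assms by (simp add: frac_eq)
    then show ?thesis using True by (simp add: Dd_def)
  next
    case f: False
    have "frac (t + 1) = t + 1" using False assms f by (simp add: frac_eq)
    then have "frac t = t + 1" by (simp add: frac_1_eq)
    then show ?thesis using f by (simp add: Dd_def min_def)
  qed
qed

lemma frac_eq_of_diff_int: "t - s \<in> \<int> \<Longrightarrow> frac t = frac s"
  by (metis add.commute diff_add_cancel frac_add_int_left)

lemma Dd_shift_int: "k \<in> \<int> \<Longrightarrow> Dd (t + k) = Dd t"
  by (rule Dd_frac_cong, rule frac_eq_of_diff_int) simp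

lemma Dd_frac: "Dd (frac t) = Dd t" by (simp add: Dd_def)

lemma Dd_neg: "Dd (- t) = Dd t"
  using cd_Dd[of 0 t] cd_Dd[of t 0] by (simp add: cdist_def min.commute)

lemma frac_in: "frac t \<in> {0..<1}" using frac_lt_1[of t] by simp

lemma cdist_frac2: "cdist x (frac y) = cdist x y"
  by (simp add: cd_Dd Dd_def frac_diff_simp)
lemma cdist_frac1: "cdist (frac x) y = cdist x y"
  by (metis cdist_def cdist_frac2 min.commute)

lemma cdist_sym: "cdist x y = cdist y x" by (simp add: cdist_def min.commute)
lemma cdist_nonneg: "0 \<le> cdist x y" by (simp add: cd_Dd Dd_nonneg)
lemma cdist_le_half: "cdist x y \<le> 1/2" unfolding cd_Dd by (rule Dd_le_half)

lemma Dd_antipode: "Dd (t - 1/2) = 1/2 - Dd t"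
proof -
  have "Dd (t - 1/2) = Dd (frac t - 1/2)"
    by (rule Dd_frac_cong) (metis diff_conv_add_uminus frac_add_simps(1))
  also have "\<dots> = \<bar>frac t - 1/2\<bar>"
  proof -
    have a: "0 \<le> frac t" "frac t < 1" using frac_ge_0[of t] frac_lt_1[of t] by auto
    then have "\<bar>frac t - 1/2\<bar> \<le> 1" by linarith
    then have "Dd (frac t - 1/2) = min \<bar>frac t - 1/2\<bar> (1 - \<bar>frac t - 1/2\<bar>)" by (rule Dd_abs)
    then show ?thesis using a by (simp add: min_def abs_if)
  qed
  finally show ?thesis using frac_in[of t] by (simp add: Dd_def min_def abs_if)
qed

lemma cdist_antipode: "cdist y (antipode z) = 1/2 - cdist y z"
  unfolding antipode_def cdist_frac2 unfolding cd_Dd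
  using Dd_antipode[of "y - z"] by (simp add: algebra_simps)

lemma exp_pmf_of_list:
  assumes "pmf_of_list_wf xs"
  shows "measure_pmf.expectation (pmf_of_list xs) (f :: _ \<Rightarrow> real) = (\<Sum>(x,p)\<leftarrow>xs. p * f x)"
proof -
  let ?A = "set (map fst xs)"
  have "measure_pmf.expectation (pmf_of_list xs) f = (\<Sum>a\<in>?A. f a * pmf (pmf_of_list xs) a)"
    using set_pmf_of_list[OF assms] by (intro integral_measure_pmf_real) auto
  also have "\<dots> = (\<Sum>a\<in>?A. f a * (\<Sum>k = 0..<length xs. if fst (xs ! k) = a then snd (xs ! k) else 0))"
    by (intro sum.cong refl, subst pmf_pmf_of_list[OF assms], subst sum_list_map_filter', subst sum_list_sum_nth) simp
  also have "\<dots> = (\<Sum>a\<in>?A. (\<Sum>k = 0..<length xs. if fst (xs ! k) = a then f a * snd (xs ! k) else 0))"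
    by (simp add: sum_distrib_left if_distrib cong: if_cong)
  also have "\<dots> = (\<Sum>k = 0..<length xs. (\<Sum>a\<in>?A. if fst (xs ! k) = a then f a * snd (xs ! k) else 0))"
    by (rule sum.swap)
  also have "\<dots> = (\<Sum>k = 0..<length xs. f (fst (xs ! k)) * snd (xs ! k))"
    by (intro sum.cong refl) (simp add: sum.delta)
  also have "\<dots> = (\<Sum>(x,p)\<leftarrow>xs. p * f x)"
    by (simp add: sum_list_sum_nth case_prod_unfold mult.commute)
  finally show ?thesis .
qed


lemma lrm_arc_ex:
  assumes n: "n \<ge> 1" and p: "profile n x"
  shows "\<exists>l L. 0 \<le> L \<and> covers n x l L \<and> (\<forall>l' L'. covers n x l' L' \<longrightarrow> L \<le> L')
      \<and> (\<exists>i<n. x i = l) \<and> (\<exists>j<n. x j = frac (l + L))"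
proof -
  define W where "W i = Max ((\<lambda>j. frac (x j - x i)) ` {..<n})" for i
  have ne: "{..<n} \<noteq> {}" using n by (auto simp: lessThan_empty_iff)
  have "Min (W ` {..<n}) \<in> W ` {..<n}" using ne by (intro Min_in) auto
  then obtain i0 where i0: "i0 < n" "W i0 = Min (W ` {..<n})" by auto
  have i0min: "W i0 \<le> W i" if "i < n" for i using i0 that by simp
  have "W i0 \<in> (\<lambda>j. frac (x j - x i0)) ` {..<n}" unfolding W_def using ne by (intro Max_in) auto
  then obtain j0 where j0: "j0 < n" "W i0 = frac (x j0 - x i0)" by auto
  have cov: "covers n x (x i0) (W i0)"
    unfolding covers_def in_arc_def W_def by (auto intro!: Max_ge)
  have nn: "0 \<le> W i0" using j0 by simp
  have minimal: "W i0 \<le> L'" if c: "covers n x l' L'" for l' L'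
  proof -
    have "Min ((\<lambda>i. frac (x i - l')) ` {..<n}) \<in> (\<lambda>i. frac (x i - l')) ` {..<n}"
      using ne by (intro Min_in) auto
    then obtain i1 where i1: "i1 < n" "frac (x i1 - l') = Min ((\<lambda>i. frac (x i - l')) ` {..<n})" by auto
    have "frac (x j - x i1) \<le> L'" if "j < n" for j
    proof -
      have le: "frac (x i1 - l') \<le> frac (x j - l')" using i1 that by simp
      have "frac (x j - x i1) = frac ((x j - l') - (x i1 - l'))" by simp
      also have "\<dots> = frac (x j - l') - frac (x i1 - l')" using le by (rule frac_diff_pos)
      also have "\<dots> \<le> L'"
      proof -
        have "frac (x j - l') \<le> L'" using c that unfolding covers_def in_arc_def by blast
        then show ?thesis using frac_ge_0[of "x i1 - l'"] by linarith
      qed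
      finally show ?thesis .
    qed
    then have "W i1 \<le> L'" unfolding W_def using ne by (intro Max.boundedI) auto
    then show ?thesis using i0min[OF i1(1)] by simp
  qed
  have "frac (x i0 + W i0) = x j0"
    using j0 p unfolding profile_def by (simp add: frac_add_simps)
  then show ?thesis using cov nn minimal i0 j0
    by (intro exI[of _ "x i0"] exI[of _ "W i0"]) auto
qed

lemma lrm_arc_props:
  assumes n: "n \<ge> 1" and p: "profile n x" and e: "lrm_arc n x = (l, L)"
  shows "0 \<le> L \<and> covers n x l L \<and> (\<forall>l' L'. covers n x l' L' \<longrightarrow> L \<le> L')
      \<and> (\<exists>i<n. x i = l) \<and> (\<exists>j<n. x j = frac (l + L))"
proof -
  let ?P = "\<lambda>p. case p of (l, L) \<Rightarrow> 0 \<le> L \<and> covers n x l L \<and> (\<forall>l' L'. covers n x l' L' \<longrightarrow> L \<le> L')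
      \<and> (\<exists>i<n. x i = l) \<and> (\<exists>j<n. x j = frac (l + L))"
  have ex: "\<exists>p. ?P p" using lrm_arc_ex[OF n p] by auto
  have eq: "lrm_arc n x = (SOME p. ?P p)" unfolding lrm_arc_def by simp
  have "?P (lrm_arc n x)" by (subst eq) (rule someI_ex[OF ex])
  then show ?thesis using e by simp
qed

lemma cost_lrm:
  assumes "lrm_arc n x = (l, L)"
  shows "measure_pmf.expectation (lrm n x) (f :: real \<Rightarrow> real) = f l / 4 + f (frac (l + L)) / 4 + f (frac (l + L/2)) / 2"
proof -
  have wf: "pmf_of_list_wf [(l, 1/4), (frac (l + L), 1/4), (frac (l + L/2), 1/2::real)]"
    by (rule pmf_of_list_wfI) auto
  show ?thesis unfolding lrm_def assms using exp_pmf_of_list[OF wf, of f] by simp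
qed

lemma cdist_shift: "cdist z (frac (l + c)) = Dd (frac (z - l) - c)"
proof -
  have "frac (frac (z - l) - c) = frac (z - l - c)" using frac_add_simps(1)[of "z-l" "-c"] by simp
  then show ?thesis unfolding cdist_frac2 cd_Dd
    by (intro Dd_frac_cong) (simp add: algebra_simps frac_diff_simp)
qed

lemma cdist_base: "cdist z l = Dd (frac (z - l))"
  unfolding cd_Dd by (simp add: Dd_frac)

lemma Dd_abs': "-1 \<le> t \<Longrightarrow> t \<le> 1 \<Longrightarrow> Dd t = min \<bar>t\<bar> (1 - \<bar>t\<bar>)"
  by (rule Dd_abs) simp

lemma P1:
  fixes w ty L :: real
  assumes "0 \<le> w" "w < 1" "0 \<le> ty" "ty \<le> L" "L \<le> 1/2"
  shows "Dd w / 4 + Dd (w - L) / 4 + Dd (w - L/2) / 2 \<ge> Dd (w - ty) / 2"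
proof -
  have a: "Dd w = min \<bar>w\<bar> (1 - \<bar>w\<bar>)" "Dd (w - L) = min \<bar>w - L\<bar> (1 - \<bar>w - L\<bar>)"
     "Dd (w - L/2) = min \<bar>w - L/2\<bar> (1 - \<bar>w - L/2\<bar>)" "Dd (w - ty) = min \<bar>w - ty\<bar> (1 - \<bar>w - ty\<bar>)"
    using assms by (intro Dd_abs'; linarith)+
  have b: "Dd (w - ty) \<le> 1 - \<bar>w - ty\<bar>" "Dd (w - ty) \<le> \<bar>w - ty\<bar>" unfolding a by auto
  show ?thesis 
  proof (cases "w \<le> L")
    case True
    then show ?thesis using b assms unfolding a by (auto simp: min_def abs_if field_simps; linarith?)
  next
    case False
    then show ?thesis using b assms unfolding a by (auto simp: min_def abs_if field_simps; linarith?)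
  qed
qed

lemma P2:
  fixes w L :: real
  assumes "0 \<le> w" "w < 1" "frac (w + 1/2) \<le> L" "L \<le> 1/2"
  shows "Dd w / 4 + Dd (w - L) / 4 + Dd (w - L/2) / 2 \<ge> 1/4"
proof -
  have c: "w + 1/2 \<le> L \<or> (w \<ge> 1/2 \<and> w - 1/2 \<le> L)"
  proof (cases "w < 1/2")
    case True
    then have "frac (w + 1/2) = w + 1/2" using assms by (simp add: frac_eq)
    then show ?thesis using assms by simp
  next
    case False
    then have e0: "frac (w - 1/2) = w - 1/2" using assms by (simp add: frac_eq)
    have "w + 1/2 = (w - 1/2) + 1" by simp
    then have "frac (w + 1/2) = frac (w - 1/2)" using frac_1_eq[of "w - 1/2"] by (simp add: add.commute)
    then have "frac (w + 1/2) = w - 1/2" using e0 by simp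
    then show ?thesis using assms False by simp
  qed
  have L0: "0 \<le> L" using assms(3) frac_ge_0[of "w + 1/2"] by linarith
  have a: "Dd w = min \<bar>w\<bar> (1 - \<bar>w\<bar>)" "Dd (w - L) = min \<bar>w - L\<bar> (1 - \<bar>w - L\<bar>)"
     "Dd (w - L/2) = min \<bar>w - L/2\<bar> (1 - \<bar>w - L/2\<bar>)"
    using assms L0 by (intro Dd_abs'; linarith)+
  show ?thesis unfolding a using assms c by (auto simp: min_def abs_if field_simps; linarith?)
qed

lemma P3a:
  fixes w L :: real
  assumes "0 \<le> w" "w \<le> L" "L \<le> 1/2" "L/2 \<le> w"
  shows "Dd w / 4 + Dd (w - L) / 4 + Dd (w - L/2) / 2 = Dd w / 2"
proof -
  have a: "Dd w = min \<bar>w\<bar> (1 - \<bar>w\<bar>)" "Dd (w - L) = min \<bar>w - L\<bar> (1 - \<bar>w - L\<bar>)"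
     "Dd (w - L/2) = min \<bar>w - L/2\<bar> (1 - \<bar>w - L/2\<bar>)"
    using assms by (intro Dd_abs'; linarith)+
  show ?thesis unfolding a using assms by (auto simp: min_def abs_if field_simps; linarith?)
qed

lemma P3b:
  fixes w L :: real
  assumes "0 \<le> w" "w \<le> L" "L \<le> 1/2" "w \<le> L/2"
  shows "Dd w / 4 + Dd (w - L) / 4 + Dd (w - L/2) / 2 = Dd (w - L) / 2"
proof -
  have a: "Dd w = min \<bar>w\<bar> (1 - \<bar>w\<bar>)" "Dd (w - L) = min \<bar>w - L\<bar> (1 - \<bar>w - L\<bar>)"
     "Dd (w - L/2) = min \<bar>w - L/2\<bar> (1 - \<bar>w - L/2\<bar>)"
    using assms by (intro Dd_abs'; linarith)+
  show ?thesis unfolding a using assms by (auto simp: min_def abs_if field_simps; linarith?)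
qed

lemma P4:
  fixes w L :: real
  assumes "0 \<le> w" "w < 1" "L \<le> 1/2" "0 \<le> L"
  shows "Dd w + Dd (w - L) \<ge> L"
proof -
  have a: "Dd w = min \<bar>w\<bar> (1 - \<bar>w\<bar>)" "Dd (w - L) = min \<bar>w - L\<bar> (1 - \<bar>w - L\<bar>)"
    using assms by (intro Dd_abs'; linarith)+
  show ?thesis unfolding a using assms by (auto simp: min_def abs_if field_simps; linarith?)
qed

lemma P5:
  fixes w L :: real
  assumes "0 \<le> w" "w \<le> L" "L \<le> 1/2"
  shows "Dd w \<le> L" "Dd (w - L) \<le> L" "Dd (w - L/2) \<le> L/2"
proof -
  have a: "Dd w = min \<bar>w\<bar> (1 - \<bar>w\<bar>)" "Dd (w - L) = min \<bar>w - L\<bar> (1 - \<bar>w - L\<bar>)"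
     "Dd (w - L/2) = min \<bar>w - L/2\<bar> (1 - \<bar>w - L/2\<bar>)"
    using assms by (intro Dd_abs'; linarith)+
  show "Dd w \<le> L" unfolding a using assms by (auto simp: min_def abs_if field_simps; linarith?)
  show "Dd (w - L) \<le> L" unfolding a using assms by (auto simp: min_def abs_if field_simps; linarith?)
  show "Dd (w - L/2) \<le> L/2" unfolding a using assms by (auto simp: min_def abs_if field_simps; linarith?)
qed

lemma frac_diff_01:
  assumes "a \<in> {0..<1}" "b \<in> {0..<1}"
  shows "frac (b - a) = (if a \<le> b then b - a else b - a + 1)"
proof (cases "a \<le> b")
  case True
  then show ?thesis using frac_diff_pos[of a b] assms by simp
next
  case False
  then show ?thesis using frac_diff_neg[of b a] assms by simp
qed

lemma frac_diff_pos01: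
  assumes "a \<in> {0..<1}" "b \<in> {0..<1}" "a \<noteq> b"
  shows "0 < frac (b - a)"
  using frac_diff_01[OF assms(1,2)] assms by (auto split: if_splits)

lemma frac_diff_inj:
  assumes "a \<in> {0..<1}" "b \<in> {0..<1}" "frac (a - x) = frac (b - x)"
  shows "a = b"
proof -
  have "frac (b - a) = frac ((b - x) - (a - x))" by simp
  also have "\<dots> = 0" using assms(3) frac_diff_pos[of "a - x" "b - x"] by simp
  finally show ?thesis using frac_diff_pos01[OF assms(1,2)] by (cases "a = b") auto
qed

definition nxt :: "real set \<Rightarrow> real \<Rightarrow> real" where
  "nxt A a = (SOME c. c \<in> A \<and> c \<noteq> a \<and> gap A a = frac (c - a))"

locale gapset =
  fixes A :: "real set"
  assumes fin: "finite A" and sub: "A \<subseteq> {0..<1}" and two: "\<exists>a b. a \<in> A \<and> b \<in> A \<and> a \<noteq> b"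
begin

lemma other: "a \<in> A \<Longrightarrow> \<exists>b\<in>A. b \<noteq> a"
  using two by metis

lemma inA: "a \<in> A \<Longrightarrow> a \<in> {0..<1}" using sub by auto

lemma gap_le: "a \<in> A \<Longrightarrow> b \<in> A \<Longrightarrow> b \<noteq> a \<Longrightarrow> gap A a \<le> frac (b - a)"
  unfolding gap_def using fin by (intro Min_le) auto

lemma gap_le1: "gap A a \<le> 1"
  unfolding gap_def using fin by (intro Min_le) auto

lemma gap_attained:
  assumes "a \<in> A"
  shows "\<exists>c\<in>A. c \<noteq> a \<and> gap A a = frac (c - a)"
proof -
  obtain b where b: "b \<in> A" "b \<noteq> a" using other[OF assms] by blast
  have "gap A a \<in> insert 1 ((\<lambda>b. frac (b - a)) ` (A - {a}))"
    unfolding gap_def using fin by (intro Min_in) auto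
  moreover have "gap A a \<noteq> 1" using gap_le[OF assms b(1,2)] frac_lt_1[of "b - a"] by auto
  ultimately show ?thesis by auto
qed

lemma gap_pos: assumes "a \<in> A" shows "0 < gap A a"
proof -
  obtain c where "c \<in> A" "c \<noteq> a" "gap A a = frac (c - a)" using gap_attained[OF assms] by blast
  then show ?thesis using frac_diff_pos01[of a c] inA assms by auto
qed

lemma nxt: assumes "a \<in> A"
  shows "nxt A a \<in> A" "nxt A a \<noteq> a" "gap A a = frac (nxt A a - a)"
proof -
  have "\<exists>c. c \<in> A \<and> c \<noteq> a \<and> gap A a = frac (c - a)" using gap_attained[OF assms] by blast
  then have "nxt A a \<in> A \<and> nxt A a \<noteq> a \<and> gap A a = frac (nxt A a - a)"
    unfolding nxt_def by (rule someI_ex)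
  then show "nxt A a \<in> A" "nxt A a \<noteq> a" "gap A a = frac (nxt A a - a)" by auto
qed

lemma nxt_inj_aux:
  assumes a: "a \<in> A" and a': "a' \<in> A" and ne: "a \<noteq> a'" and eq: "nxt A a = nxt A a'"
    and le: "frac (nxt A a - a) \<le> frac (nxt A a' - a')"
  shows False
proof -
  let ?c = "nxt A a"
  have "frac (a - a') = frac ((?c - a') - (?c - a))" by simp
  also have "\<dots> = frac (?c - a') - frac (?c - a)" using le eq by (intro frac_diff_pos) simp
  finally have e: "frac (a - a') = gap A a' - gap A a" using nxt(3)[OF a] nxt(3)[OF a'] eq by simp
  have "gap A a' \<le> frac (a - a')" using gap_le[OF a' a ne] .
  then show False using e gap_pos[OF a] by simp
qed

lemma nxt_inj: "inj_on (nxt A) A"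
proof (rule inj_onI)
  fix a a' assume a: "a \<in> A" and a': "a' \<in> A" and eq: "nxt A a = nxt A a'"
  show "a = a'"
  proof (rule ccontr)
    assume ne: "a \<noteq> a'"
    show False
    proof (cases "frac (nxt A a - a) \<le> frac (nxt A a' - a')")
      case True
      then show ?thesis using nxt_inj_aux[OF a a' ne eq] by simp
    next
      case False
      then show ?thesis using nxt_inj_aux[OF a' a _ eq[symmetric]] ne by simp
    qed
  qed
qed

lemma nxt_image: "nxt A ` A = A"
  using fin nxt(1) nxt_inj by (intro endo_inj_surj) auto

lemma sum_nxt: "(\<Sum>a\<in>A. F (nxt A a)) = (\<Sum>a\<in>A. F a)"
proof -
  have "(\<Sum>a\<in>A. F a) = (\<Sum>a\<in>nxt A ` A. F a)" using nxt_image by simp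
  also have "\<dots> = (\<Sum>a\<in>A. F (nxt A a))" using nxt_inj by (simp add: sum.reindex)
  finally show ?thesis by simp
qed

lemma nxt_less_iff: assumes a: "a \<in> A" shows "nxt A a < a \<longleftrightarrow> a = Max A"
proof
  assume "a = Max A"
  then show "nxt A a < a" using nxt[OF a] fin by (metis Max_ge order_less_le)
next
  assume lt: "nxt A a < a"
  show "a = Max A"
  proof (rule ccontr)
    assume ne: "a \<noteq> Max A"
    have m: "Max A \<in> A" using fin a by (intro Max_in) auto
    have "a \<le> Max A" using fin a by simp
    then have alt: "a < Max A" using ne by simp
    have "gap A a \<le> frac (Max A - a)" using gap_le[OF a m] ne by simp
    also have "\<dots> = Max A - a" using frac_diff_01[of a "Max A"] inA[OF a] inA[OF m] alt by simp
    finally have "gap A a \<le> Max A - a" .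
    moreover have "gap A a = nxt A a - a + 1"
      using nxt(3)[OF a] frac_diff_01[of a "nxt A a"] inA[OF a] inA[OF nxt(1)[OF a]] lt by simp
    ultimately show False using inA[OF m] inA[OF nxt(1)[OF a]] by simp
  qed
qed

lemma sum_gap: "(\<Sum>a\<in>A. gap A a) = 1"
proof -
  have "(\<Sum>a\<in>A. gap A a) = (\<Sum>a\<in>A. (nxt A a - a) + (if a = Max A then 1 else 0))"
  proof (rule sum.cong[OF refl])
    fix a assume a: "a \<in> A"
    show "gap A a = (nxt A a - a) + (if a = Max A then 1 else 0)"
      using nxt(3)[OF a] frac_diff_01[of a "nxt A a"] inA[OF a] inA[OF nxt(1)[OF a]]
        nxt_less_iff[OF a] by (auto split: if_splits)
  qed
  also have "\<dots> = (\<Sum>a\<in>A. nxt A a) - (\<Sum>a\<in>A. a) + (\<Sum>a\<in>A. if a = Max A then 1 else 0)"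
    by (simp add: sum.distrib sum_subtractf)
  also have "\<dots> = 1"
  proof -
    have "Max A \<in> A" using fin two by (intro Max_in) auto
    then show ?thesis using sum_nxt[of "\<lambda>a. a"] fin by simp
  qed
  finally show ?thesis .
qed

lemma sum_gap': "(\<Sum>a\<in>A. gap A a) = 1" by (rule sum_gap)

definition rcf :: "real \<Rightarrow> real" where
  "rcf q = (\<Sum>a\<in>A. if frac (a + gap A a / 2) = q then gap A a else 0)"

lemma rcf_nonneg: "0 \<le> rcf q"
  unfolding rcf_def using gap_pos by (intro sum_nonneg) (auto intro: less_imp_le)

lemma rcf_outside: "q \<notin> (\<lambda>a. frac (a + gap A a / 2)) ` A \<Longrightarrow> rcf q = 0"
  unfolding rcf_def by (intro sum.neutral) auto

lemma rcf_sum: "(\<Sum>q\<in>(\<lambda>a. frac (a + gap A a / 2)) ` A. rcf q) = 1"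
proof -
  let ?M = "(\<lambda>a. frac (a + gap A a / 2)) ` A"
  have "(\<Sum>q\<in>?M. rcf q) = (\<Sum>a\<in>A. \<Sum>q\<in>?M. if frac (a + gap A a / 2) = q then gap A a else 0)"
    unfolding rcf_def by (rule sum.swap)
  also have "\<dots> = (\<Sum>a\<in>A. gap A a)"
    using fin by (intro sum.cong refl) (simp add: sum.delta)
  finally show ?thesis using sum_gap by simp
qed

lemma rcf_prob: "(\<integral>\<^sup>+x. ennreal (rcf x) \<partial>count_space UNIV) = 1"
proof -
  let ?M = "(\<lambda>a. frac (a + gap A a / 2)) ` A"
  have "(\<integral>\<^sup>+x. ennreal (rcf x) \<partial>count_space UNIV) = (\<Sum>q\<in>?M. ennreal (rcf q))"
    using fin rcf_outside by (intro nn_integral_count_space') auto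
  also have "\<dots> = ennreal (\<Sum>q\<in>?M. rcf q)" using rcf_nonneg by (simp add: sum_ennreal)
  also have "\<dots> = 1" using rcf_sum by simp
  finally show ?thesis .
qed

lemma pmf_rcf: "pmf (embed_pmf rcf) q = rcf q"
  using rcf_nonneg rcf_prob by (rule pmf_embed_pmf)

lemma exp_rcf: "measure_pmf.expectation (embed_pmf rcf) (h :: real \<Rightarrow> real) =
    (\<Sum>a\<in>A. gap A a * h (frac (a + gap A a / 2)))"
proof -
  let ?M = "(\<lambda>a. frac (a + gap A a / 2)) ` A"
  have "measure_pmf.expectation (embed_pmf rcf) h = (\<Sum>q\<in>?M. h q * pmf (embed_pmf rcf) q)"
  proof (rule integral_measure_pmf_real)
    show "finite ?M" using fin by simp
    fix q assume "q \<in> set_pmf (embed_pmf rcf)"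
    then have "rcf q \<noteq> 0" by (simp add: set_pmf_eq pmf_rcf)
    then show "q \<in> ?M" using rcf_outside by blast
  qed
  also have "\<dots> = (\<Sum>q\<in>?M. \<Sum>a\<in>A. if frac (a + gap A a / 2) = q then h q * gap A a else 0)"
    unfolding pmf_rcf rcf_def by (simp add: sum_distrib_left if_distrib cong: if_cong)
  also have "\<dots> = (\<Sum>a\<in>A. \<Sum>q\<in>?M. if frac (a + gap A a / 2) = q then h q * gap A a else 0)"
    by (rule sum.swap)
  also have "\<dots> = (\<Sum>a\<in>A. gap A a * h (frac (a + gap A a / 2)))"
    using fin by (intro sum.cong refl) (simp add: sum.delta mult.commute)
  finally show ?thesis .
qed

end

definition Pq :: "real \<Rightarrow> real" where
  "Pq u = (if u \<le> 1/2 then u^2/2 else 1/4 - (1-u)^2/2)"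
definition Ig :: "real \<Rightarrow> real \<Rightarrow> real" where
  "Ig u g = (if u + g \<le> 1 then Pq (u+g) - Pq u else 1/4 - Pq u + Pq (u+g-1))"
definition corr :: "real \<Rightarrow> real \<Rightarrow> real" where
  "corr u g = (if 1 < u + g then (min (1-u) (u+g-1))^2 else 0)"

lemma Pq_lo: "u \<le> 1/2 \<Longrightarrow> Pq u = u^2/2" by (simp add: Pq_def)
lemma Pq_hi: "1/2 \<le> u \<Longrightarrow> Pq u = 1/4 - (1-u)^2/2"
proof (cases "u = 1/2")
  case True
  show ?thesis unfolding True by (simp add: Pq_def power2_eq_square)
qed (auto simp: Pq_def)

lemma Dd_v1: "0 \<le> t \<Longrightarrow> t \<le> 1/2 \<Longrightarrow> Dd t = t"
  by (subst Dd_abs') (auto simp: min_def)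
lemma Dd_v2: "1/2 \<le> t \<Longrightarrow> t \<le> 1 \<Longrightarrow> Dd t = 1 - t"
  by (subst Dd_abs') (auto simp: min_def)
lemma Dd_v3: "1 \<le> t \<Longrightarrow> t \<le> 3/2 \<Longrightarrow> Dd t = t - 1"
proof -
  assume a: "1 \<le> t" "t \<le> 3/2"
  have "Dd t = Dd ((t - 1) + 1)" by simp
  also have "\<dots> = Dd (t - 1)" by (rule Dd_shift_int) simp
  also have "\<dots> = t - 1" using a by (intro Dd_v1) auto
  finally show ?thesis .
qed

lemma Ig_tele:
  assumes "0 \<le> u" "u < 1" "0 < g" "g < 1"
  shows "Ig u g = Pq (frac (u+g)) - frac (u+g)/4 - Pq u + u/4 + g/4"
proof (cases "u + g < 1")
  case True
  then have "frac (u+g) = u+g" using assms by (simp add: frac_eq)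
  then show ?thesis using True by (simp add: Ig_def field_simps)
next
  case False
  have f: "frac (u+g) = u + g - 1"
  proof -
    have "frac (u + g - 1) = u + g - 1" using assms False by (simp add: frac_eq)
    moreover have "frac (u + g - 1) = frac (u + g)" using frac_1_eq[of "u+g-1"] by simp
    ultimately show ?thesis by simp
  qed
  show ?thesis
  proof (cases "u + g = 1")
    case True
    then show ?thesis using f by (simp add: Ig_def Pq_def)
  next
    case False
    then show ?thesis unfolding Ig_def f using \<open>\<not> u + g < 1\<close> by (simp add: field_simps)
  qed
qed

lemma I_R1: assumes "0 \<le> u" "0 < g" "u + g \<le> 1/2"
  shows "g * Dd (u + g/2) = Ig u g - corr u g"
proof -
  have d: "Dd (u + g/2) = u + g/2" using assms by (intro Dd_v1) auto
  show ?thesis unfolding d using assms by (simp add: Ig_def corr_def Pq_lo Pq_hi power2_eq_square field_simps)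
qed

lemma I_R2: assumes "1/2 \<le> u" "0 < g" "u + g \<le> 1"
  shows "g * Dd (u + g/2) = Ig u g - corr u g"
proof -
  have d: "Dd (u + g/2) = 1 - (u + g/2)" using assms by (intro Dd_v2) auto
  show ?thesis unfolding d using assms by (simp add: Ig_def corr_def Pq_lo Pq_hi power2_eq_square field_simps)
qed

lemma I_R3: assumes "0 \<le> u" "u < 1/2" "1/2 < u + g" "g < 1/2"
  shows "Ig u g - corr u g \<le> g * Dd (u + g/2)"
proof -
  have ig: "Ig u g - corr u g = 1/4 - (1-u-g)^2/2 - u^2/2"
    using assms by (simp add: Ig_def corr_def Pq_def)
  show ?thesis
  proof (cases "u + g/2 \<le> 1/2")
    case True
    then have d: "Dd (u + g/2) = u + g/2" using assms by (intro Dd_v1) auto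
    have "g * (u + g/2) - (1/4 - (1-u-g)^2/2 - u^2/2) = (u+g-1/2)^2"
      by (simp add: power2_eq_square field_simps)
    then show ?thesis unfolding ig d using zero_le_power2[of "u+g-1/2"] by linarith
  next
    case False
    then have d: "Dd (u + g/2) = 1 - (u + g/2)" using assms by (intro Dd_v2) auto
    have "g * (1 - (u + g/2)) - (1/4 - (1-u-g)^2/2 - u^2/2) = (1/2 - u)^2"
      by (simp add: power2_eq_square field_simps)
    then show ?thesis unfolding ig d using zero_le_power2[of "1/2 - u"] by linarith
  qed
qed

lemma I_R4: assumes "u < 1" "1 < u + g" "g < 1/2"
  shows "g * Dd (u + g/2) = Ig u g - corr u g"
proof -
  have ig: "Ig u g = 1/4 - (1/4 - (1-u)^2/2) + (u+g-1)^2/2"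
    using assms by (simp add: Ig_def Pq_def)
  show ?thesis
  proof (cases "u + g/2 \<le> 1")
    case True
    then have d: "Dd (u + g/2) = 1 - (u + g/2)" using assms by (intro Dd_v2) auto
    have "min (1-u) (u+g-1) = u+g-1" using True by (simp add: min_def)
    then show ?thesis unfolding ig d corr_def using assms by (simp add: power2_eq_square field_simps)
  next
    case False
    then have d: "Dd (u + g/2) = u + g/2 - 1" using assms by (intro Dd_v3) auto
    have "min (1-u) (u+g-1) = 1-u" using False by (simp add: min_def)
    then show ?thesis unfolding ig d corr_def using assms by (simp add: power2_eq_square field_simps)
  qed
qed

lemma I_ineq: assumes "0 \<le> u" "u < 1" "0 < g" "g < 1/2"
  shows "Ig u g - corr u g \<le> g * Dd (u + g/2)"
proof -
  consider "u + g \<le> 1/2" | "1/2 \<le> u \<and> u + g \<le> 1" | "u < 1/2 \<and> 1/2 < u + g" | "1 < u + g"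
    using assms by linarith
  then show ?thesis
  proof cases
    case 1 then show ?thesis using I_R1[of u g] assms by simp
  next
    case 2 then show ?thesis using I_R2[of u g] assms by simp
  next
    case 3 then show ?thesis using I_R3[of u g] assms by simp
  next
    case 4 then show ?thesis using I_R4[of u g] assms by simp
  qed
qed

lemma I_eq: assumes "0 \<le> u" "u < 1" "0 < g" "g < 1/2" "\<not> (u < 1/2 \<and> 1/2 < u + g)"
  shows "g * Dd (u + g/2) = Ig u g - corr u g"
proof -
  consider "u + g \<le> 1/2" | "1/2 \<le> u \<and> u + g \<le> 1" | "1 < u + g"
    using assms by linarith
  then show ?thesis
  proof cases
    case 1 then show ?thesis using I_R1[of u g] assms by simp
  next
    case 2 then show ?thesis using I_R2[of u g] assms by simp
  next
    case 3 then show ?thesis using I_R4[of u g] assms by simp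
  qed
qed

lemma corr_nonneg: "0 \<le> corr u g" by (simp add: corr_def)

lemma frac_ff: "frac (frac p + frac q) = frac (p + q)" by (simp add: frac_add_simps)

lemma cdist_eq_Dd_frac: "cdist y b = Dd (frac (b - y))"
proof -
  have "Dd (y - b) = Dd (- (b - y))" by simp
  then show ?thesis unfolding cd_Dd Dd_frac Dd_neg .
qed

lemma frac_of_01: "0 \<le> t \<Longrightarrow> t < 1 \<Longrightarrow> frac t = t" by (simp add: frac_eq)

context gapset
begin

lemma gap_lt1: "a \<in> A \<Longrightarrow> gap A a < 1"
proof -
  assume a: "a \<in> A"
  show ?thesis using nxt(3)[OF a] frac_lt_1[of "nxt A a - a"] by simp
qed

lemma frac_nxt: "a \<in> A \<Longrightarrow> frac (frac (a - y) + gap A a) = frac (nxt A a - y)"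
  using nxt(3)[of a] frac_ff[of "a - y" "nxt A a - a"] by simp

lemma mid_dist: "a \<in> A \<Longrightarrow> cdist y (frac (a + gap A a / 2)) = Dd (frac (a - y) + gap A a / 2)"
proof -
  have "cdist y (frac (a + gap A a / 2)) = cdist y (a + gap A a / 2)" by (rule cdist_frac2)
  also have "\<dots> = Dd (frac (a + gap A a / 2 - y))" by (rule cdist_eq_Dd_frac)
  also have "frac (a + gap A a / 2 - y) = frac (frac (a - y) + gap A a / 2)"
    using frac_add_simps(1)[of "a - y" "gap A a / 2"] by (simp add: algebra_simps)
  finally show ?thesis by (simp only: Dd_frac)
qed

lemma tele_sum: "(\<Sum>a\<in>A. Ig (frac (a - y)) (gap A a)) = 1/4"
proof -
  define Q where "Q t = Pq (frac (t - y)) - frac (t - y) / 4" for t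
  have "(\<Sum>a\<in>A. Ig (frac (a - y)) (gap A a)) = (\<Sum>a\<in>A. Q (nxt A a) - Q a + gap A a / 4)"
  proof (rule sum.cong[OF refl])
    fix a assume a: "a \<in> A"
    have "Ig (frac (a - y)) (gap A a) = Pq (frac (frac (a - y) + gap A a)) - frac (frac (a - y) + gap A a)/4
        - Pq (frac (a - y)) + frac (a - y)/4 + gap A a/4"
      using gap_pos[OF a] gap_lt1[OF a] frac_lt_1[of "a - y"] by (intro Ig_tele) auto
    then show "Ig (frac (a - y)) (gap A a) = Q (nxt A a) - Q a + gap A a / 4"
      unfolding Q_def frac_nxt[OF a] by simp
  qed
  also have "\<dots> = (\<Sum>a\<in>A. Q (nxt A a)) - (\<Sum>a\<in>A. Q a) + (\<Sum>a\<in>A. gap A a) / 4"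
    by (simp add: sum.distrib sum_subtractf sum_divide_distrib)
  also have "\<dots> = 1/4" using sum_nxt[of Q] sum_gap by simp
  finally show ?thesis .
qed

lemma corr_unique_aux:
  assumes a: "a \<in> A" and a': "a' \<in> A" and ne: "a \<noteq> a'"
    and h: "1 < frac (a - y) + gap A a" and le: "frac (a - y) \<le> frac (a' - y)"
  shows False
proof -
  have "frac (a' - a) = frac ((a' - y) - (a - y))" by simp
  also have "\<dots> = frac (a' - y) - frac (a - y)" using le by (rule frac_diff_pos)
  finally have e: "frac (a' - a) = frac (a' - y) - frac (a - y)" .
  have "gap A a \<le> frac (a' - a)" using gap_le[OF a a'] ne by simp
  then show False using e h frac_lt_1[of "a' - y"] by simp
qed

lemma corr_unique:
  assumes a: "a \<in> A" and a': "a' \<in> A"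
    and h: "1 < frac (a - y) + gap A a" and h': "1 < frac (a' - y) + gap A a'"
  shows "a = a'"
proof (rule ccontr)
  assume ne: "a \<noteq> a'"
  show False
  proof (cases "frac (a - y) \<le> frac (a' - y)")
    case True then show ?thesis using corr_unique_aux[OF a a' ne h] by simp
  next
    case False then show ?thesis using corr_unique_aux[OF a' a _ h'] ne by simp
  qed
qed

lemma corr_le:
  assumes a: "a \<in> A" and b: "b \<in> A" and small: "\<forall>a\<in>A. gap A a < 1/2"
  shows "corr (frac (a - y)) (gap A a) \<le> (cdist y b)^2"
proof (cases "1 < frac (a - y) + gap A a")
  case False
  then show ?thesis by (simp add: corr_def)
next
  case True
  let ?u = "frac (a - y)" let ?g = "gap A a"
  have g: "0 < ?g" "?g < 1/2" using gap_pos[OF a] small a by auto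
  have u: "?u < 1" by (rule frac_lt_1)
  have mpos: "0 \<le> min (1 - ?u) (?u + ?g - 1)" using True u by simp
  have key: "min (1 - ?u) (?u + ?g - 1) \<le> cdist y b"
  proof (cases "b = a")
    case True
    have "cdist y b = Dd ?u" using True by (simp add: cdist_eq_Dd_frac)
    also have "\<dots> = 1 - ?u" using \<open>1 < ?u + ?g\<close> g u by (intro Dd_v2) auto
    finally show ?thesis by simp
  next
    case False
    let ?b = "frac (b - a)"
    have bg: "?g \<le> ?b" using gap_le[OF a b False] .
    have b1: "?b < 1" by (rule frac_lt_1)
    have "frac (b - y) = frac (?u + ?b)" using frac_ff[of "a - y" "b - a"] by simp
    also have "\<dots> = ?u + ?b - 1"
    proof -
      have "frac (?u + ?b - 1) = ?u + ?b - 1" using bg b1 u \<open>1 < ?u + ?g\<close> by (intro frac_of_01) auto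
      then show ?thesis using frac_1_eq[of "?u + ?b - 1"] by simp
    qed
    finally have fb: "frac (b - y) = ?u + ?b - 1" .
    have "cdist y b = min (?u + ?b - 1) (1 - (?u + ?b - 1))"
      unfolding cdist_eq_Dd_frac fb using bg b1 u \<open>1 < ?u + ?g\<close> by (subst Dd_abs') auto
    then show ?thesis using bg b1 by (auto simp: min_def)
  qed
  have "corr ?u ?g = (min (1 - ?u) (?u + ?g - 1))^2" using True by (simp add: corr_def)
  also have "\<dots> \<le> (cdist y b)^2" using key mpos by (intro power_mono) auto
  finally show ?thesis .
qed

lemma sum_corr_le:
  assumes b: "b \<in> A" and small: "\<forall>a\<in>A. gap A a < 1/2"
  shows "(\<Sum>a\<in>A. corr (frac (a - y)) (gap A a)) \<le> (cdist y b)^2"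
proof (cases "\<exists>a0\<in>A. 1 < frac (a0 - y) + gap A a0")
  case False
  then have "(\<Sum>a\<in>A. corr (frac (a - y)) (gap A a)) = 0"
    by (intro sum.neutral) (auto simp: corr_def)
  then show ?thesis by simp
next
  case True
  then obtain a0 where a0: "a0 \<in> A" "1 < frac (a0 - y) + gap A a0" by blast
  have "(\<Sum>a\<in>A. corr (frac (a - y)) (gap A a)) = (\<Sum>a\<in>A. if a = a0 then corr (frac (a0 - y)) (gap A a0) else 0)"
  proof (rule sum.cong[OF refl])
    fix a assume a: "a \<in> A"
    show "corr (frac (a - y)) (gap A a) = (if a = a0 then corr (frac (a0 - y)) (gap A a0) else 0)"
    proof (cases "a = a0")
      case False
      then have "\<not> 1 < frac (a - y) + gap A a" using corr_unique[OF a a0(1) _ a0(2)] by blast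
      then show ?thesis using False by (simp add: corr_def)
    qed simp
  qed
  also have "\<dots> = corr (frac (a0 - y)) (gap A a0)" using fin a0(1) by (simp add: sum.delta)
  also have "\<dots> \<le> (cdist y b)^2" by (rule corr_le[OF a0(1) b small])
  finally show ?thesis .
qed

lemma rc_lower:
  assumes b: "b \<in> A" and small: "\<forall>a\<in>A. gap A a < 1/2"
  shows "1/4 - (cdist y b)^2 \<le> (\<Sum>a\<in>A. gap A a * cdist y (frac (a + gap A a / 2)))"
proof -
  have "(\<Sum>a\<in>A. Ig (frac (a - y)) (gap A a) - corr (frac (a - y)) (gap A a))
      \<le> (\<Sum>a\<in>A. gap A a * cdist y (frac (a + gap A a / 2)))"
  proof (rule sum_mono)
    fix a assume a: "a \<in> A"
    show "Ig (frac (a - y)) (gap A a) - corr (frac (a - y)) (gap A a) \<le> gap A a * cdist y (frac (a + gap A a / 2))"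
      unfolding mid_dist[OF a] using gap_pos[OF a] small a frac_lt_1[of "a - y"]
      by (intro I_ineq) auto
  qed
  moreover have "(\<Sum>a\<in>A. Ig (frac (a - y)) (gap A a) - corr (frac (a - y)) (gap A a))
      = 1/4 - (\<Sum>a\<in>A. corr (frac (a - y)) (gap A a))"
    using tele_sum by (simp add: sum_subtractf)
  ultimately show ?thesis using sum_corr_le[OF b small, of y] by linarith
qed

lemma cover: "\<exists>a\<in>A. 1 \<le> frac (a - y) + gap A a"
proof -
  have ne: "A \<noteq> {}" using two by auto
  have "Max ((\<lambda>a. frac (a - y)) ` A) \<in> (\<lambda>a. frac (a - y)) ` A" using fin ne by (intro Max_in) auto
  then obtain a0 where a0: "a0 \<in> A" "frac (a0 - y) = Max ((\<lambda>a. frac (a - y)) ` A)" by auto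
  have "1 \<le> frac (a0 - y) + gap A a0"
  proof (rule ccontr)
    assume "\<not> ?thesis"
    then have "frac (frac (a0 - y) + gap A a0) = frac (a0 - y) + gap A a0"
      using gap_pos[OF a0(1)] by (intro frac_of_01) auto
    then have "frac (nxt A a0 - y) = frac (a0 - y) + gap A a0" using frac_nxt[OF a0(1)] by simp
    moreover have "frac (nxt A a0 - y) \<le> frac (a0 - y)" unfolding a0(2) using fin nxt(1)[OF a0(1)] by simp
    ultimately show False using gap_pos[OF a0(1)] by simp
  qed
  then show ?thesis using a0 by blast
qed

lemma no_straddle:
  assumes a: "a \<in> A" and c: "frac (y + 1/2) \<in> A"
  shows "\<not> (frac (a - y) < 1/2 \<and> 1/2 < frac (a - y) + gap A a)"
proof
  assume h: "frac (a - y) < 1/2 \<and> 1/2 < frac (a - y) + gap A a"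
  let ?c = "frac (y + 1/2)"
  show False
  proof (cases "?c = a")
    case True
    have "frac (a - y) = frac (frac (y + 1/2) - y)" using True by simp
    also have "\<dots> = frac (1/2 :: real)" using frac_add_simps(1)[of "y + 1/2" "- y"] by simp
    also have "\<dots> = 1/2" by (simp add: frac_eq)
    finally show False using h by simp
  next
    case False
    have "gap A a \<le> frac (?c - a)" using gap_le[OF a c False] .
    also have "frac (?c - a) = frac (1/2 - frac (a - y))"
    proof -
      have "frac (?c - a) = frac (y + 1/2 - a)" using frac_add_simps(1)[of "y + 1/2" "- a"] by simp
      also have "\<dots> = frac (1/2 - (a - y))" by (simp add: algebra_simps)
      also have "\<dots> = frac (1/2 - frac (a - y))" by (simp add: frac_diff_simp)
      finally show ?thesis .
    qed
    also have "\<dots> = 1/2 - frac (a - y)"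
    proof -
      have h1: "frac (a - y) < 1/2" using h by simp
      have h0: "0 \<le> frac (a - y)" by simp
      show ?thesis by (intro frac_of_01) (use h1 h0 in linarith)+
    qed
    finally show False using h by simp
  qed
qed

lemma rc_upper:
  assumes small: "\<forall>a\<in>A. gap A a < 1/2" and c: "frac (y + 1/2) \<in> A"
  shows "\<exists>b\<in>A. (\<Sum>a\<in>A. gap A a * cdist y (frac (a + gap A a / 2))) \<le> 1/4 - (cdist y b)^2"
proof -
  have "(\<Sum>a\<in>A. gap A a * cdist y (frac (a + gap A a / 2)))
      = (\<Sum>a\<in>A. Ig (frac (a - y)) (gap A a) - corr (frac (a - y)) (gap A a))"
  proof (rule sum.cong[OF refl])
    fix a assume a: "a \<in> A"
    show "gap A a * cdist y (frac (a + gap A a / 2)) = Ig (frac (a - y)) (gap A a) - corr (frac (a - y)) (gap A a)"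
      unfolding mid_dist[OF a] using gap_pos[OF a] small a frac_lt_1[of "a - y"] no_straddle[OF a c]
      by (intro I_eq) auto
  qed
  also have "\<dots> = 1/4 - (\<Sum>a\<in>A. corr (frac (a - y)) (gap A a))"
    using tele_sum by (simp add: sum_subtractf)
  finally have S: "(\<Sum>a\<in>A. gap A a * cdist y (frac (a + gap A a / 2))) = 1/4 - (\<Sum>a\<in>A. corr (frac (a - y)) (gap A a))" .
  obtain a0 where a0: "a0 \<in> A" "1 \<le> frac (a0 - y) + gap A a0" using cover by blast
  have cl: "corr (frac (a0 - y)) (gap A a0) \<le> (\<Sum>a\<in>A. corr (frac (a - y)) (gap A a))"
    using fin a0(1) corr_nonneg by (intro member_le_sum) auto
  have sn: "0 \<le> (\<Sum>a\<in>A. corr (frac (a - y)) (gap A a))" using corr_nonneg by (intro sum_nonneg) auto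
  let ?u = "frac (a0 - y)" let ?g = "gap A a0" let ?n = "nxt A a0"
  have g: "0 < ?g" "?g < 1/2" using gap_pos[OF a0(1)] small a0(1) by auto
  have u: "?u < 1" by (rule frac_lt_1)
  have fn: "frac (?n - y) = ?u + ?g - 1"
  proof -
    have "frac (?u + ?g - 1) = ?u + ?g - 1" using a0(2) g u by (intro frac_of_01) auto
    then have "frac (?u + ?g) = ?u + ?g - 1" using frac_1_eq[of "?u + ?g - 1"] by simp
    then show ?thesis using frac_nxt[OF a0(1)] by simp
  qed
  have dn: "cdist y ?n = ?u + ?g - 1"
    unfolding cdist_eq_Dd_frac fn using a0(2) g u by (intro Dd_v1) auto
  show ?thesis
  proof (cases "?u + ?g = 1")
    case True
    then show ?thesis using S sn dn nxt(1)[OF a0(1)] by (intro bexI[of _ ?n]) auto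
  next
    case False
    then have gt: "1 < ?u + ?g" using a0(2) by simp
    have da: "cdist y a0 = 1 - ?u"
      unfolding cdist_eq_Dd_frac using gt g u by (intro Dd_v2) auto
    have corr0: "corr ?u ?g = (min (1 - ?u) (?u + ?g - 1))^2" using gt by (simp add: corr_def)
    show ?thesis
    proof (cases "1 - ?u \<le> ?u + ?g - 1")
      case True
      then show ?thesis using S cl corr0 da a0(1) by (intro bexI[of _ a0]) (auto simp: min_def)
    next
      case False
      then show ?thesis using S cl corr0 dn nxt(1)[OF a0(1)] by (intro bexI[of _ ?n]) (auto simp: min_def)
    qed
  qed
qed

lemma mid_far:
  assumes a: "a \<in> A" and b: "b \<in> A"
  shows "gap A a / 2 \<le> cdist (frac (a + gap A a / 2)) b"
proof -
  let ?g = "gap A a" let ?b = "frac (b - a)"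
  have "cdist (frac (a + ?g / 2)) b = cdist (a + ?g / 2) b" by (rule cdist_frac1)
  also have "\<dots> = Dd (a + ?g/2 - b)" by (rule cd_Dd)
  also have "\<dots> = Dd (frac (a + ?g/2 - b))" by (simp only: Dd_frac)
  also have "frac (a + ?g/2 - b) = frac (?g/2 - ?b)"
    using frac_diff_simp[of "?g/2" "b - a"] by (simp add: algebra_simps)
  finally have e0: "cdist (frac (a + ?g / 2)) b = Dd (frac (?g/2 - ?b))" .
  have e: "cdist (frac (a + ?g / 2)) b = Dd (?b - ?g/2)"
    using e0 Dd_neg[of "?b - ?g/2"] by (simp add: Dd_frac)
  have g: "0 < ?g" "?g < 1" using gap_pos[OF a] gap_lt1[OF a] by auto
  show ?thesis
  proof (cases "b = a")
    case True
    then have "Dd (?b - ?g/2) = Dd (?g/2)" using Dd_neg[of "?g/2"] by simp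
    also have "\<dots> = ?g/2" using g by (intro Dd_v1) auto
    finally show ?thesis using e by simp
  next
    case False
    have bg: "?g \<le> ?b" using gap_le[OF a b False] .
    have "Dd (?b - ?g/2) = min (?b - ?g/2) (1 - (?b - ?g/2))"
      using bg g frac_lt_1[of "b - a"] by (subst Dd_abs') auto
    then show ?thesis using e bg frac_lt_1[of "b - a"] by (auto simp: min_def)
  qed
qed

lemma near: "\<exists>a\<in>A. \<exists>b\<in>A. cdist y b \<le> gap A a / 2"
proof -
  obtain a0 where a0: "a0 \<in> A" "1 \<le> frac (a0 - y) + gap A a0" using cover by blast
  let ?u = "frac (a0 - y)" let ?g = "gap A a0" let ?n = "nxt A a0"
  have g: "0 < ?g" "?g < 1" using gap_pos[OF a0(1)] gap_lt1[OF a0(1)] by auto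
  have u: "?u < 1" "0 \<le> ?u" using frac_lt_1[of "a0 - y"] by auto
  have fn: "frac (?n - y) = ?u + ?g - 1"
  proof -
    have "frac (?u + ?g - 1) = ?u + ?g - 1" using a0(2) g u by (intro frac_of_01) auto
    then have "frac (?u + ?g) = ?u + ?g - 1" using frac_1_eq[of "?u + ?g - 1"] by simp
    then show ?thesis using frac_nxt[OF a0(1)] by simp
  qed
  have "cdist y ?n \<le> frac (?n - y)"
    unfolding cdist_eq_Dd_frac Dd_def by simp
  then have dn: "cdist y ?n \<le> ?u + ?g - 1" using fn by simp
  have da: "cdist y a0 \<le> 1 - ?u"
    unfolding cdist_eq_Dd_frac Dd_def by simp
  show ?thesis
  proof (cases "1 - ?u \<le> ?g / 2")
    case True
    then have "cdist y a0 \<le> gap A a0 / 2" using da by linarith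
    then show ?thesis using a0(1) by blast
  next
    case False
    then have "cdist y ?n \<le> gap A a0 / 2" using dn by linarith
    then show ?thesis using a0(1) nxt(1)[OF a0(1)] by blast
  qed
qed

end

lemma cost_nonneg: "0 \<le> cost P z"
  unfolding cost_def by (rule integral_nonneg_AE) (simp add: cdist_nonneg)

lemma profile_upd: "profile n x \<Longrightarrow> v \<in> {0..<1} \<Longrightarrow> profile n (x(i := v))"
  unfolding profile_def by auto

lemma antipodes_fin: "finite (antipodes n x)" unfolding antipodes_def by simp
lemma antipodes_sub: "antipodes n x \<subseteq> {0..<1}"
  unfolding antipodes_def antipode_def using frac_lt_1 by auto
lemma antipode_in: "j < n \<Longrightarrow> antipode (x j) \<in> antipodes n x"
  unfolding antipodes_def by auto

lemma gap_le_raw: "finite A \<Longrightarrow> b \<in> A \<Longrightarrow> b \<noteq> a \<Longrightarrow> gap A a \<le> frac (b - a)"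
  unfolding gap_def by (intro Min_le) auto

lemma frac_ff2: "frac (frac p - frac q) = frac (p - q)"
  using frac_diff[of p q] by simp

lemma frac_minus_in: "frac (frac p - q) = frac (p - q)"
  using frac_add_simps(1)[of p "-q"] by simp

lemma semi_of_gap:
  assumes a: "a \<in> antipodes n x" and g: "1/2 \<le> gap (antipodes n x) a"
  shows "one_semicircle n x"
  unfolding one_semicircle_def
proof (intro exI[of _ a])
  show "covers n x a (1/2)"
    unfolding covers_def in_arc_def
  proof (intro allI impI)
    fix j assume j: "j < n"
    let ?b = "antipode (x j)"
    have bA: "?b \<in> antipodes n x" using antipode_in[OF j] .
    have e: "frac (x j - a) = frac (frac (?b - a) - 1/2)"
    proof -
      have "frac (frac (?b - a) - 1/2) = frac ((?b - a) - 1/2)"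
        using frac_add_simps(1)[of "?b - a" "- 1/2"] by simp
      also have "\<dots> = frac (frac (x j + 1/2) - (a + 1/2))" unfolding antipode_def by (simp add: algebra_simps)
      also have "\<dots> = frac ((x j + 1/2) - (a + 1/2))" by (rule frac_minus_in)
      finally show ?thesis by simp
    qed
    show "frac (x j - a) \<le> 1/2"
    proof (cases "?b = a")
      case True
      have "frac (-(1/2) :: real) = 1 - frac (1/2)"
        by (rule frac_non_zero) (simp add: frac_eq)
      then have "frac (-(1/2) :: real) = 1/2" by (simp add: frac_eq)
      then show ?thesis using e True by simp
    next
      case False
      have "1/2 \<le> frac (?b - a)"
        using g gap_le_raw[OF antipodes_fin bA False] by linarith
      moreover have "frac (?b - a) < 1" by (rule frac_lt_1)
      ultimately have "frac (frac (?b - a) - 1/2) = frac (?b - a) - 1/2" by (intro frac_of_01) auto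
      then show ?thesis using e \<open>frac (?b - a) < 1\<close> by simp
    qed
  qed
qed

lemma notsemi_gapset:
  assumes n: "n \<ge> 1" and ns: "\<not> one_semicircle n x"
  shows "gapset (antipodes n x)" "\<forall>a\<in>antipodes n x. gap (antipodes n x) a < 1/2"
proof -
  show small: "\<forall>a\<in>antipodes n x. gap (antipodes n x) a < 1/2"
    using semi_of_gap ns by (meson not_le)
  let ?a = "antipode (x 0)"
  have aA: "?a \<in> antipodes n x" using antipode_in[of 0 n x] n by simp
  have "\<exists>b\<in>antipodes n x. b \<noteq> ?a"
  proof (rule ccontr)
    assume "\<not> ?thesis"
    then have "antipodes n x - {?a} = {}" by auto
    then have e: "(\<lambda>b. frac (b - ?a)) ` (antipodes n x - {?a}) = {}" by blast
    have "gap (antipodes n x) ?a = 1" unfolding gap_def e by simp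
    then show False using small aA by auto
  qed
  then show "gapset (antipodes n x)"
    using aA antipodes_fin antipodes_sub by unfold_locales auto
qed

lemma cost_rc:
  assumes "gapset (antipodes n x)"
  shows "measure_pmf.expectation (rc n x) (h :: real \<Rightarrow> real) =
    (\<Sum>a\<in>antipodes n x. gap (antipodes n x) a * h (frac (a + gap (antipodes n x) a / 2)))"
proof -
  have "rc n x = embed_pmf (gapset.rcf (antipodes n x))"
    unfolding rc_def gapset.rcf_def[OF assms] by simp
  then show ?thesis using gapset.exp_rcf[OF assms] by simp
qed

lemma rc_lower_main:
  assumes n: "n \<ge> 1" and ns: "\<not> one_semicircle n x" and j: "j < n"
  shows "1/4 - (cdist z (antipode (x j)))^2 \<le> cost (rc n x) z"
proof -
  have g: "gapset (antipodes n x)" and s: "\<forall>a\<in>antipodes n x. gap (antipodes n x) a < 1/2"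
    using notsemi_gapset[OF n ns] by auto
  show ?thesis unfolding cost_def cost_rc[OF g]
    by (rule gapset.rc_lower[OF g antipode_in[OF j] s])
qed

lemma rc_upper_main:
  assumes n: "n \<ge> 1" and ns: "\<not> one_semicircle n x" and i: "i < n"
  shows "\<exists>j<n. cost (rc n x) (x i) \<le> 1/4 - (cdist (x i) (antipode (x j)))^2"
proof -
  have g: "gapset (antipodes n x)" and s: "\<forall>a\<in>antipodes n x. gap (antipodes n x) a < 1/2"
    using notsemi_gapset[OF n ns] by auto
  have c: "frac (x i + 1/2) \<in> antipodes n x" using antipode_in[OF i] unfolding antipode_def .
  obtain b where b: "b \<in> antipodes n x"
    "(\<Sum>a\<in>antipodes n x. gap (antipodes n x) a * cdist (x i) (frac (a + gap (antipodes n x) a / 2))) \<le> 1/4 - (cdist (x i) b)^2"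
    using gapset.rc_upper[OF g s c] by blast
  obtain j where "j < n" "b = antipode (x j)" using b(1) unfolding antipodes_def by auto
  then show ?thesis using b(2) unfolding cost_def cost_rc[OF g] by blast
qed

lemma lrm_L_half:
  assumes n: "n \<ge> 1" and p: "profile n x" and s: "one_semicircle n x" and e: "lrm_arc n x = (l, L)"
  shows "L \<le> 1/2"
proof -
  obtain l0 where "covers n x l0 (1/2)" using s unfolding one_semicircle_def by blast
  then show ?thesis using lrm_arc_props[OF n p e] by blast
qed

lemma cdist_rel: "cdist z p = Dd (frac (z - l) - frac (p - l))"
proof -
  have "frac (frac (z - l) - frac (p - l)) = frac ((z - l) - (p - l))" by (rule frac_ff2)
  then have "frac (frac (z - l) - frac (p - l)) = frac (z - p)" by simp
  then show ?thesis unfolding cd_Dd by (intro Dd_frac_cong) simp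
qed

lemma cost_lrm_Dd:
  assumes e: "lrm_arc n x = (l, L)"
  shows "cost (lrm n x) z = Dd (frac (z - l)) / 4 + Dd (frac (z - l) - L) / 4 + Dd (frac (z - l) - L/2) / 2"
  unfolding cost_def cost_lrm[OF e] cdist_shift by (simp only: cdist_base)

lemma LRM_truth:
  assumes n: "n \<ge> 1" and p: "profile n x" and s: "one_semicircle n x" and i: "i < n"
  shows "\<exists>k<n. cost (lrm n x) (x i) = cdist (x i) (x k) / 2"
proof -
  obtain l L where e: "lrm_arc n x = (l, L)" by (cases "lrm_arc n x") auto
  note pr = lrm_arc_props[OF n p e]
  have L: "L \<le> 1/2" by (rule lrm_L_half[OF n p s e])
  obtain i0 where i0: "i0 < n" "x i0 = l" using pr by blast
  obtain j0 where j0: "j0 < n" "x j0 = frac (l + L)" using pr by blast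
  let ?w = "frac (x i - l)"
  have w: "0 \<le> ?w" "?w \<le> L" using pr i unfolding covers_def in_arc_def by auto
  show ?thesis
  proof (cases "L/2 \<le> ?w")
    case True
    have "cost (lrm n x) (x i) = Dd ?w / 2" unfolding cost_lrm_Dd[OF e] using w L True by (rule P3a)
    also have "\<dots> = cdist (x i) (x i0) / 2" unfolding i0(2) cdist_base ..
    finally show ?thesis using i0(1) by blast
  next
    case False
    have "cost (lrm n x) (x i) = Dd (?w - L) / 2" unfolding cost_lrm_Dd[OF e] using w L False by (intro P3b) auto
    also have "\<dots> = cdist (x i) (x j0) / 2" unfolding j0(2) cdist_shift ..
    finally show ?thesis using j0(1) by blast
  qed
qed

lemma LRM_lower:
  assumes n: "n \<ge> 1" and p: "profile n y" and s: "one_semicircle n y" and k: "k < n"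
  shows "cdist z (y k) / 2 \<le> cost (lrm n y) z"
proof -
  obtain l L where e: "lrm_arc n y = (l, L)" by (cases "lrm_arc n y") auto
  note pr = lrm_arc_props[OF n p e]
  have L: "L \<le> 1/2" by (rule lrm_L_half[OF n p s e])
  have t: "frac (y k - l) \<le> L" using pr k unfolding covers_def in_arc_def by auto
  show ?thesis unfolding cost_lrm_Dd[OF e] cdist_rel[of z "y k" l]
    using t L frac_lt_1[of "z - l"] by (intro P1) auto
qed

lemma frac_anti_rel: "frac (antipode z - l) = frac (frac (z - l) + 1/2)"
proof -
  have "frac (antipode z - l) = frac (z + 1/2 - l)" unfolding antipode_def by (rule frac_minus_in)
  also have "\<dots> = frac ((z - l) + 1/2)" by (simp add: algebra_simps)
  also have "\<dots> = frac (frac (z - l) + 1/2)" by simp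
  finally show ?thesis .
qed

lemma LRM_anti:
  assumes n: "n \<ge> 1" and p: "profile n y" and s: "one_semicircle n y" and e: "lrm_arc n y = (l, L)"
    and a: "in_arc l L (antipode z)"
  shows "1/4 \<le> cost (lrm n y) z"
proof -
  have L: "L \<le> 1/2" by (rule lrm_L_half[OF n p s e])
  have "frac (frac (z - l) + 1/2) \<le> L" using a frac_anti_rel[of z l] unfolding in_arc_def by simp
  then show ?thesis unfolding cost_lrm_Dd[OF e] using L frac_lt_1[of "z - l"] by (intro P2) auto
qed

lemma anti_in_arc:
  assumes ns: "\<not> one_semicircle n x" and i: "i < n"
    and cov: "\<forall>j<n. j \<noteq> i \<longrightarrow> in_arc l L (x j)" and L: "L \<le> 1/2"
  shows "in_arc l L (antipode (x i))"
proof (rule ccontr)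
  assume na: "\<not> ?thesis"
  let ?w = "frac (x i - l)"
  have gt: "L < frac (?w + 1/2)" using na frac_anti_rel[of "x i" l] unfolding in_arc_def by simp
  show False
  proof (cases "?w \<le> 1/2")
    case True
    have "covers n x l (1/2)" unfolding covers_def
    proof (intro allI impI)
      fix j assume j: "j < n"
      show "in_arc l (1/2) (x j)"
      proof (cases "j = i")
        case True then show ?thesis using \<open>?w \<le> 1/2\<close> unfolding in_arc_def by simp
      next
        case False then show ?thesis using cov j L unfolding in_arc_def by force
      qed
    qed
    then show False using ns unfolding one_semicircle_def by blast
  next
    case False
    have w1: "?w < 1" by (rule frac_lt_1)
    have "frac (?w + 1/2) = ?w - 1/2"
    proof -
      have "frac (?w - 1/2) = ?w - 1/2" using False w1 by (intro frac_of_01) auto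
      moreover have "frac (?w - 1/2 + 1) = frac (?w - 1/2)" by (rule frac_1_eq)
      moreover have "?w - 1/2 + 1 = ?w + 1/2" by simp
      ultimately show ?thesis by simp
    qed
    then have wL: "L < ?w - 1/2" using gt by simp
    have "covers n x (x i) (1/2)" unfolding covers_def
    proof (intro allI impI)
      fix j assume j: "j < n"
      show "in_arc (x i) (1/2) (x j)"
      proof (cases "j = i")
        case True then show ?thesis unfolding in_arc_def by simp
      next
        case False
        let ?v = "frac (x j - l)"
        have v: "?v \<le> L" "0 \<le> ?v" using cov j False unfolding in_arc_def by auto
        have "frac (x j - x i) = frac (?v - ?w)" using frac_ff2[of "x j - l" "x i - l"] by simp
        also have "\<dots> = ?v - ?w + 1"
        proof -
          have "frac (?v - ?w + 1) = ?v - ?w + 1" by (intro frac_of_01) (use v wL w1 in linarith)+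
          then show ?thesis using frac_1_eq[of "?v - ?w"] by simp
        qed
        finally show ?thesis using v wL unfolding in_arc_def by simp
      qed
    qed
    then show False using ns unfolding one_semicircle_def by blast
  qed
qed

lemma sp_main:
  assumes n: "n \<ge> 1" and p: "profile n x" and i: "i < n" and v: "v \<in> {0..<1}"
  shows "cost (M n x) (x i) \<le> cost (M n (x(i := v))) (x i)"
proof -
  let ?y = "x(i := v)"
  have p': "profile n ?y" using profile_upd[OF p v] .
  have same: "?y k = x k" if "k \<noteq> i" for k using that by simp
  show ?thesis
  proof (cases "one_semicircle n x")
    case sx: True
    obtain k where k: "k < n" "cost (lrm n x) (x i) = cdist (x i) (x k) / 2"
      using LRM_truth[OF n p sx i] by blast
    have c0: "cost (M n x) (x i) = cdist (x i) (x k) / 2" using k sx by (simp add: M_def)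
    show ?thesis
    proof (cases "k = i")
      case True
      then have "cost (M n x) (x i) = 0" using c0 by (simp add: cdist_def)
      then show ?thesis using cost_nonneg by simp
    next
      case ki: False
      show ?thesis
      proof (cases "one_semicircle n ?y")
        case True
        have "cdist (x i) (?y k) / 2 \<le> cost (lrm n ?y) (x i)" by (rule LRM_lower[OF n p' True k(1)])
        then show ?thesis using c0 same[OF ki] True by (simp add: M_def)
      next
        case False
        have "1/4 - (cdist (x i) (antipode (?y k)))^2 \<le> cost (rc n ?y) (x i)"
          by (rule rc_lower_main[OF n False k(1)])
        then have h: "1/4 - (1/2 - cdist (x i) (x k))^2 \<le> cost (M n ?y) (x i)"
          using same[OF ki] False by (simp add: M_def cdist_antipode)
        have c: "0 \<le> cdist (x i) (x k)" "cdist (x i) (x k) \<le> 1/2" by (rule cdist_nonneg, rule cdist_le_half)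
        have "cdist (x i) (x k) / 2 \<le> 1/4 - (1/2 - cdist (x i) (x k))^2"
        proof -
          have "0 \<le> cdist (x i) (x k) * (1/2 - cdist (x i) (x k))" using c by simp
          then show ?thesis by (simp add: power2_eq_square algebra_simps)
        qed
        then show ?thesis using c0 h by linarith
      qed
    qed
  next
    case nsx: False
    obtain j where j: "j < n" "cost (rc n x) (x i) \<le> 1/4 - (cdist (x i) (antipode (x j)))^2"
      using rc_upper_main[OF n nsx i] by blast
    have c0: "cost (M n x) (x i) \<le> 1/4 - (cdist (x i) (antipode (x j)))^2" using j nsx by (simp add: M_def)
    show ?thesis
    proof (cases "one_semicircle n ?y")
      case sy: True
      obtain l L where e: "lrm_arc n ?y = (l, L)" by (cases "lrm_arc n ?y") auto
      note pr = lrm_arc_props[OF n p' e]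
      have L: "L \<le> 1/2" by (rule lrm_L_half[OF n p' sy e])
      have cov: "\<forall>k<n. k \<noteq> i \<longrightarrow> in_arc l L (x k)"
        using pr same unfolding covers_def by metis
      have "in_arc l L (antipode (x i))" by (rule anti_in_arc[OF nsx i cov L])
      then have "1/4 \<le> cost (lrm n ?y) (x i)" by (rule LRM_anti[OF n p' sy e])
      moreover have "cost (M n x) (x i) \<le> 1/4" using c0 zero_le_power2[of "cdist (x i) (antipode (x j))"] by linarith
      moreover have "cost (M n ?y) (x i) = cost (lrm n ?y) (x i)" using sy by (simp add: M_def)
      ultimately show ?thesis by linarith
    next
      case nsy: False
      show ?thesis
      proof (cases "j = i")
        case True
        have z: "cdist (x i) (x i) = 0" by (simp add: cdist_def)
        have "cdist (x i) (antipode (x i)) = 1/2" using cdist_antipode[of "x i" "x i"] z by simp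
        then have h: "cdist (x i) (antipode (x j)) = 1/2" using True by simp
        have "(cdist (x i) (antipode (x j)))^2 = 1/4" unfolding h by (simp add: power2_eq_square)
        then have "cost (M n x) (x i) \<le> 0" using c0 by linarith
        then show ?thesis using cost_nonneg[of "M n ?y" "x i"] by linarith
      next
        case False
        have "1/4 - (cdist (x i) (antipode (?y j)))^2 \<le> cost (rc n ?y) (x i)"
          by (rule rc_lower_main[OF n nsy j(1)])
        then show ?thesis using c0 same[OF False] nsy by (simp add: M_def)
      qed
    qed
  qed
qed

lemma approx_main:
  assumes n: "n \<ge> 1" and p: "profile n x"
  shows "mc n (M n x) x \<le> 3/2 * (INF y\<in>{0..<1}. mc n (return_pmf y) x)"
proof -
  define Mx where "Mx y = Max ((\<lambda>i. cdist y (x i)) ` {..<n})" for y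
  have ne: "{..<n} \<noteq> {}" using n by (auto simp: lessThan_empty_iff)
  have Mge: "cdist y (x i) \<le> Mx y" if "i < n" for y i
    unfolding Mx_def using that by (intro Max_ge) auto
  have Mle: "Mx y \<le> c" if "\<And>i. i < n \<Longrightarrow> cdist y (x i) \<le> c" for y c
    unfolding Mx_def using ne that by (intro Max.boundedI) auto
  have ret: "mc n (return_pmf y) x = Mx y" for y unfolding mc_def Mx_def by simp
  have INF_ge: "c \<le> (INF y\<in>{0..<1}. mc n (return_pmf y) x)" if "\<And>y. y \<in> {0..<1} \<Longrightarrow> c \<le> Mx y" for c
    unfolding ret using that by (intro cINF_greatest) auto
  show ?thesis
  proof (cases "one_semicircle n x")
    case s: True
    obtain l L where e: "lrm_arc n x = (l, L)" by (cases "lrm_arc n x") auto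
    note pr = lrm_arc_props[OF n p e]
    have L: "L \<le> 1/2" "0 \<le> L" using lrm_L_half[OF n p s e] pr by auto
    obtain i0 where i0: "i0 < n" "x i0 = l" using pr by blast
    obtain j0 where j0: "j0 < n" "x j0 = frac (l + L)" using pr by blast
    have w: "0 \<le> frac (x i - l)" "frac (x i - l) \<le> L" if "i < n" for i
      using pr that unfolding covers_def in_arc_def by auto
    have "mc n (M n x) x = Mx l / 4 + Mx (frac (l + L)) / 4 + Mx (frac (l + L/2)) / 2"
      using s unfolding M_def mc_def Mx_def by (simp add: cost_lrm[OF e])
    moreover have "Mx l \<le> L"
    proof (rule Mle)
      fix i assume i: "i < n"
      have "cdist l (x i) = Dd (frac (x i - l))" using cdist_sym[of l "x i"] cdist_base[of "x i" l] by simp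
      then show "cdist l (x i) \<le> L" using w[OF i] L P5(1)[of "frac (x i - l)" L] by simp
    qed
    moreover have "Mx (frac (l + L)) \<le> L"
    proof (rule Mle)
      fix i assume i: "i < n"
      show "cdist (frac (l + L)) (x i) \<le> L" unfolding cdist_sym[of "frac (l + L)"] cdist_shift
        using w[OF i] L by (intro P5(2))
    qed
    moreover have "Mx (frac (l + L/2)) \<le> L/2"
    proof (rule Mle)
      fix i assume i: "i < n"
      show "cdist (frac (l + L/2)) (x i) \<le> L/2" unfolding cdist_sym[of "frac (l + L/2)"] cdist_shift
        using w[OF i] L by (intro P5(3))
    qed
    ultimately have up: "mc n (M n x) x \<le> 3/2 * (L/2)" by linarith
    have "L/2 \<le> (INF y\<in>{0..<1}. mc n (return_pmf y) x)"
    proof (rule INF_ge)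
      fix y :: real
      have "L \<le> Dd (frac (y - l)) + Dd (frac (y - l) - L)"
        using L frac_lt_1[of "y - l"] by (intro P4) auto
      also have "\<dots> = cdist y (x i0) + cdist y (x j0)" unfolding i0(2) j0(2) cdist_shift by (simp only: cdist_base)
      also have "\<dots> \<le> Mx y + Mx y" using Mge[OF i0(1)] Mge[OF j0(1)] by (rule add_mono)
      finally show "L/2 \<le> Mx y" by simp
    qed
    then show ?thesis using up by linarith
  next
    case ns: False
    let ?A = "antipodes n x"
    have g: "gapset ?A" and small: "\<forall>a\<in>?A. gap ?A a < 1/2" using notsemi_gapset[OF n ns] by auto
    have fin: "finite ?A" by (rule antipodes_fin)
    have neA: "?A \<noteq> {}" using gapset.two[OF g] by auto
    define G where "G = Max (gap ?A ` ?A)"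
    have "G \<in> gap ?A ` ?A" unfolding G_def using fin neA by (intro Max_in) auto
    then obtain a1 where a1: "a1 \<in> ?A" "G = gap ?A a1" by auto
    have Gge: "gap ?A a \<le> G" if "a \<in> ?A" for a unfolding G_def using fin that by (intro Max_ge) auto
    have G0: "0 \<le> G" "G < 1/2" using a1 gapset.gap_pos[OF g a1(1)] small by auto
    have mc_eq: "mc n (M n x) x = (\<Sum>a\<in>?A. gap ?A a * Mx (frac (a + gap ?A a / 2)))"
      using ns unfolding M_def mc_def Mx_def by (simp add: cost_rc[OF g])
    have "(\<Sum>a\<in>?A. gap ?A a * Mx (frac (a + gap ?A a / 2))) \<le> (\<Sum>a\<in>?A. gap ?A a * (1/2 - gap ?A a / 2))"
    proof (rule sum_mono)
      fix a assume a: "a \<in> ?A"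
      have "Mx (frac (a + gap ?A a / 2)) \<le> 1/2 - gap ?A a / 2"
      proof (rule Mle)
        fix i assume i: "i < n"
        have "gap ?A a / 2 \<le> cdist (frac (a + gap ?A a / 2)) (antipode (x i))"
          by (rule gapset.mid_far[OF g a antipode_in[OF i]])
        then show "cdist (frac (a + gap ?A a / 2)) (x i) \<le> 1/2 - gap ?A a / 2"
          using cdist_antipode[of "frac (a + gap ?A a / 2)" "x i"] by linarith
      qed
      then show "gap ?A a * Mx (frac (a + gap ?A a / 2)) \<le> gap ?A a * (1/2 - gap ?A a / 2)"
        using gapset.gap_pos[OF g a] by (intro mult_left_mono) auto
    qed
    also have "\<dots> = (\<Sum>a\<in>?A. gap ?A a) / 2 - (\<Sum>a\<in>?A. (gap ?A a)^2) / 2"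
      by (simp add: sum_divide_distrib sum_subtractf power2_eq_square algebra_simps)
    also have "\<dots> \<le> 1/2 - G^2/2"
    proof -
      have "G^2 \<le> (\<Sum>a\<in>?A. (gap ?A a)^2)" unfolding a1(2) using fin a1(1) by (intro member_le_sum) auto
      then show ?thesis using gapset.sum_gap[OF g] by simp
    qed
    finally have up: "mc n (M n x) x \<le> 1/2 - G^2/2" using mc_eq by simp
    have low: "1/2 - G/2 \<le> (INF y\<in>{0..<1}. mc n (return_pmf y) x)"
    proof (rule INF_ge)
      fix y :: real
      obtain a b where ab: "a \<in> ?A" "b \<in> ?A" "cdist y b \<le> gap ?A a / 2" using gapset.near[OF g, of y] by blast
      obtain j where j: "j < n" "b = antipode (x j)" using ab(2) unfolding antipodes_def by auto
      have "cdist y (x j) = 1/2 - cdist y b" using cdist_antipode[of y "x j"] j(2) by simp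
      then have "1/2 - G/2 \<le> cdist y (x j)" using ab(3) Gge[OF ab(1)] by linarith
      then show "1/2 - G/2 \<le> Mx y" using Mge[OF j(1), of y] by linarith
    qed
    have "1/2 - G^2/2 \<le> 3/2 * (1/2 - G/2)"
    proof -
      have "0 \<le> (1/2 - G) * (1 - G)" using G0 by simp
      then show ?thesis by (simp add: power2_eq_square field_simps)
    qed
    moreover have "3/2 * (1/2 - G/2) \<le> 3/2 * (INF y\<in>{0..<1}. mc n (return_pmf y) x)"
      using low by (rule mult_left_mono) simp
    ultimately show ?thesis using up by linarith
  qed
qed


theorem theorem4:
  fixes n :: nat
  assumes "n \<ge> 1"
  shows "strategyproof n (M n) \<and>
    (\<forall>x. profile n x \<longrightarrow>
       mc n (M n x) x \<le> 3/2 * (INF y\<in>{0..<1}. mc n (return_pmf y) x))"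
proof
  show "strategyproof n (M n)" unfolding strategyproof_def using sp_main[OF assms] by blast
  show "\<forall>x. profile n x \<longrightarrow> mc n (M n x) x \<le> 3/2 * (INF y\<in>{0..<1}. mc n (return_pmf y) x)"
    using approx_main[OF assms] by blast
qed

end
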